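(* Let $L$ be a finite lattice which is a subdirect product $L\subseteq\prod_{i=1}^t L_i$ of finite lattices. Then every line top of $L$ is sub-irreducible, and consequently every line top of $L$ belongs to the scaffolding $G(L)$.
   Context: $\pi_i:L\to L_i$ is the surjective restricted projection, $\sigma_i(y):=\bigwedge\{x\in L:\pi_i(x)=y\}$, and $G(L):=\bigcup_{i=1}^t\sigma_i(L_i\setminus\{0\})$. An element $x$ is a line top if the set of its lower covers $x_1,\dots,x_n$ has $n\ge 3$ elements and their meet $\underline{x}=x_1\wedge\dots\wedge x_n$ is covered by each $x_i$. A quotient $a/b$ is prime if $b\prec a$; $a/b$ transposes up to $c/d$ if $a\wedge d=b$, $a\vee d=c$; quotients are projective if connected by a finite chain of up/down transpositions. An element $v\ne0$ is sub-irreducible if all prime quotients $v/w$ ($w\prec v$) are mutually projective. *)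

theory Defs
  imports "HOL-Algebra.Lattice" "HOL-Library.FuncSet"
begin

definition covered_by :: "('a, 'b) gorder_scheme \<Rightarrow> 'a \<Rightarrow> 'a \<Rightarrow> bool" where
  "covered_by M y x \<longleftrightarrow> y \<in> carrier M \<and> x \<in> carrier M \<and> y \<sqsubset>\<^bsub>M\<^esub> x \<and>
     \<not> (\<exists>z\<in>carrier M. y \<sqsubset>\<^bsub>M\<^esub> z \<and> z \<sqsubset>\<^bsub>M\<^esub> x)"

definition lower_covers :: "('a, 'b) gorder_scheme \<Rightarrow> 'a \<Rightarrow> 'a set" where
  "lower_covers M x = {y \<in> carrier M. covered_by M y x}"

definition line_top :: "('a, 'b) gorder_scheme \<Rightarrow> 'a \<Rightarrow> bool" where
  "line_top M x \<longleftrightarrow> x \<in> carrier M \<and> finite (lower_covers M x) \<and>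
     card (lower_covers M x) \<ge> 3 \<and>
     (\<forall>y\<in>lower_covers M x. covered_by M (\<Sqinter>\<^bsub>M\<^esub> (lower_covers M x)) y)"

text \<open>A quotient a/b is represented by the pair (a, b).\<close>

definition prime_quotient :: "('a, 'b) gorder_scheme \<Rightarrow> 'a \<times> 'a \<Rightarrow> bool" where
  "prime_quotient M q \<longleftrightarrow> covered_by M (snd q) (fst q)"

definition transposes_up :: "('a, 'b) gorder_scheme \<Rightarrow> 'a \<times> 'a \<Rightarrow> 'a \<times> 'a \<Rightarrow> bool" where
  "transposes_up M q r \<longleftrightarrow>
     fst q \<in> carrier M \<and> snd q \<in> carrier M \<and> fst r \<in> carrier M \<and> snd r \<in> carrier M \<and>
     fst q \<sqinter>\<^bsub>M\<^esub> snd r = snd q \<and> fst q \<squnion>\<^bsub>M\<^esub> snd r = fst r"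

definition transposes_down :: "('a, 'b) gorder_scheme \<Rightarrow> 'a \<times> 'a \<Rightarrow> 'a \<times> 'a \<Rightarrow> bool" where
  "transposes_down M q r \<longleftrightarrow> transposes_up M r q"

definition projective :: "('a, 'b) gorder_scheme \<Rightarrow> 'a \<times> 'a \<Rightarrow> 'a \<times> 'a \<Rightarrow> bool" where
  "projective M = (\<lambda>q r. transposes_up M q r \<or> transposes_down M q r)\<^sup>*\<^sup>*"

definition sub_irreducible :: "('a, 'b) gorder_scheme \<Rightarrow> 'a \<Rightarrow> bool" where
  "sub_irreducible M v \<longleftrightarrow> v \<in> carrier M \<and> v \<noteq> \<bottom>\<^bsub>M\<^esub> \<and>
     (\<forall>w1 \<in> lower_covers M v. \<forall>w2 \<in> lower_covers M v. projective M (v, w1) (v, w2))"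

text \<open>Subdirect products. The factors L_1..L_t are given as a family Ls of gorders over a
  common element type; elements of the product are the extensional functions on {1..t}.\<close>

definition prod_sub :: "(nat \<Rightarrow> 'a gorder) \<Rightarrow> nat \<Rightarrow> (nat \<Rightarrow> 'a) set \<Rightarrow> (nat \<Rightarrow> 'a) gorder" where
  "prod_sub Ls t S = \<lparr>carrier = S, eq = (=),
     le = (\<lambda>x y. \<forall>i\<in>{1..t}. x i \<sqsubseteq>\<^bsub>Ls i\<^esub> y i)\<rparr>"

definition subdirect_product :: "(nat \<Rightarrow> 'a gorder) \<Rightarrow> nat \<Rightarrow> (nat \<Rightarrow> 'a) set \<Rightarrow> bool" where
  "subdirect_product Ls t S \<longleftrightarrow>
     (\<forall>i\<in>{1..t}. lattice (Ls i) \<and> finite (carrier (Ls i))) \<and>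
     S \<noteq> {} \<and>
     S \<subseteq> (\<Pi>\<^sub>E i\<in>{1..t}. carrier (Ls i)) \<and>
     (\<forall>x\<in>S. \<forall>y\<in>S. (\<lambda>i\<in>{1..t}. x i \<sqinter>\<^bsub>Ls i\<^esub> y i) \<in> S) \<and>
     (\<forall>x\<in>S. \<forall>y\<in>S. (\<lambda>i\<in>{1..t}. x i \<squnion>\<^bsub>Ls i\<^esub> y i) \<in> S) \<and>
     (\<forall>i\<in>{1..t}. (\<lambda>x. x i) ` S = carrier (Ls i))"

definition sigma :: "(nat \<Rightarrow> 'a gorder) \<Rightarrow> nat \<Rightarrow> (nat \<Rightarrow> 'a) set \<Rightarrow> nat \<Rightarrow> 'a \<Rightarrow> (nat \<Rightarrow> 'a)" where
  "sigma Ls t S i y = \<Sqinter>\<^bsub>prod_sub Ls t S\<^esub> {x \<in> S. x i = y}"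

definition scaffolding :: "(nat \<Rightarrow> 'a gorder) \<Rightarrow> nat \<Rightarrow> (nat \<Rightarrow> 'a) set \<Rightarrow> (nat \<Rightarrow> 'a) set" where
  "scaffolding Ls t S = (\<Union>i\<in>{1..t}. sigma Ls t S i ` (carrier (Ls i) - {\<bottom>\<^bsub>Ls i\<^esub>}))"

end

theory Submission
  imports Defs
begin

lemma K_meet_closed: "lattice K \<Longrightarrow> a \<in> carrier K \<Longrightarrow> b \<in> carrier K \<Longrightarrow> a \<sqinter>\<^bsub>K\<^esub> b \<in> carrier K"
proof - assume "lattice K" then interpret lattice K . show "a \<in> carrier K \<Longrightarrow> b \<in> carrier K \<Longrightarrow> a \<sqinter>\<^bsub>K\<^esub> b \<in> carrier K" by simp qed
lemma K_join_closed: "lattice K \<Longrightarrow> a \<in> carrier K \<Longrightarrow> b \<in> carrier K \<Longrightarrow> a \<squnion>\<^bsub>K\<^esub> b \<in> carrier K"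
proof - assume "lattice K" then interpret lattice K . show "a \<in> carrier K \<Longrightarrow> b \<in> carrier K \<Longrightarrow> a \<squnion>\<^bsub>K\<^esub> b \<in> carrier K" by simp qed
lemma K_meet_left: "lattice K \<Longrightarrow> a \<in> carrier K \<Longrightarrow> b \<in> carrier K \<Longrightarrow> a \<sqinter>\<^bsub>K\<^esub> b \<sqsubseteq>\<^bsub>K\<^esub> a"
proof - assume "lattice K" then interpret lattice K . show "a \<in> carrier K \<Longrightarrow> b \<in> carrier K \<Longrightarrow> a \<sqinter>\<^bsub>K\<^esub> b \<sqsubseteq>\<^bsub>K\<^esub> a" by (rule meet_left) qed
lemma K_meet_right: "lattice K \<Longrightarrow> a \<in> carrier K \<Longrightarrow> b \<in> carrier K \<Longrightarrow> a \<sqinter>\<^bsub>K\<^esub> b \<sqsubseteq>\<^bsub>K\<^esub> b"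
proof - assume "lattice K" then interpret lattice K . show "a \<in> carrier K \<Longrightarrow> b \<in> carrier K \<Longrightarrow> a \<sqinter>\<^bsub>K\<^esub> b \<sqsubseteq>\<^bsub>K\<^esub> b" by (rule meet_right) qed
lemma K_join_left: "lattice K \<Longrightarrow> a \<in> carrier K \<Longrightarrow> b \<in> carrier K \<Longrightarrow> a \<sqsubseteq>\<^bsub>K\<^esub> a \<squnion>\<^bsub>K\<^esub> b"
proof - assume "lattice K" then interpret lattice K . show "a \<in> carrier K \<Longrightarrow> b \<in> carrier K \<Longrightarrow> a \<sqsubseteq>\<^bsub>K\<^esub> a \<squnion>\<^bsub>K\<^esub> b" by (rule join_left) qed
lemma K_join_right: "lattice K \<Longrightarrow> a \<in> carrier K \<Longrightarrow> b \<in> carrier K \<Longrightarrow> b \<sqsubseteq>\<^bsub>K\<^esub> a \<squnion>\<^bsub>K\<^esub> b"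
proof - assume "lattice K" then interpret lattice K . show "a \<in> carrier K \<Longrightarrow> b \<in> carrier K \<Longrightarrow> b \<sqsubseteq>\<^bsub>K\<^esub> a \<squnion>\<^bsub>K\<^esub> b" by (rule join_right) qed
lemma K_meet_le: "lattice K \<Longrightarrow> z \<sqsubseteq>\<^bsub>K\<^esub> a \<Longrightarrow> z \<sqsubseteq>\<^bsub>K\<^esub> b \<Longrightarrow> a \<in> carrier K \<Longrightarrow> b \<in> carrier K \<Longrightarrow> z \<in> carrier K \<Longrightarrow> z \<sqsubseteq>\<^bsub>K\<^esub> a \<sqinter>\<^bsub>K\<^esub> b"
proof - assume "lattice K" then interpret lattice K . show "z \<sqsubseteq>\<^bsub>K\<^esub> a \<Longrightarrow> z \<sqsubseteq>\<^bsub>K\<^esub> b \<Longrightarrow> a \<in> carrier K \<Longrightarrow> b \<in> carrier K \<Longrightarrow> z \<in> carrier K \<Longrightarrow> z \<sqsubseteq>\<^bsub>K\<^esub> a \<sqinter>\<^bsub>K\<^esub> b" by (rule meet_le) qed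
lemma K_join_le: "lattice K \<Longrightarrow> a \<sqsubseteq>\<^bsub>K\<^esub> z \<Longrightarrow> b \<sqsubseteq>\<^bsub>K\<^esub> z \<Longrightarrow> a \<in> carrier K \<Longrightarrow> b \<in> carrier K \<Longrightarrow> z \<in> carrier K \<Longrightarrow> a \<squnion>\<^bsub>K\<^esub> b \<sqsubseteq>\<^bsub>K\<^esub> z"
proof - assume "lattice K" then interpret lattice K . show "a \<sqsubseteq>\<^bsub>K\<^esub> z \<Longrightarrow> b \<sqsubseteq>\<^bsub>K\<^esub> z \<Longrightarrow> a \<in> carrier K \<Longrightarrow> b \<in> carrier K \<Longrightarrow> z \<in> carrier K \<Longrightarrow> a \<squnion>\<^bsub>K\<^esub> b \<sqsubseteq>\<^bsub>K\<^esub> z" by (rule join_le) qed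
lemma K_refl: "lattice K \<Longrightarrow> a \<in> carrier K \<Longrightarrow> a \<sqsubseteq>\<^bsub>K\<^esub> a"
proof - assume "lattice K" then interpret lattice K . show "a \<in> carrier K \<Longrightarrow> a \<sqsubseteq>\<^bsub>K\<^esub> a" by simp qed
lemma K_trans: "lattice K \<Longrightarrow> a \<sqsubseteq>\<^bsub>K\<^esub> b \<Longrightarrow> b \<sqsubseteq>\<^bsub>K\<^esub> c \<Longrightarrow> a \<in> carrier K \<Longrightarrow> b \<in> carrier K \<Longrightarrow> c \<in> carrier K \<Longrightarrow> a \<sqsubseteq>\<^bsub>K\<^esub> c"
proof - assume "lattice K" then interpret lattice K . show "a \<sqsubseteq>\<^bsub>K\<^esub> b \<Longrightarrow> b \<sqsubseteq>\<^bsub>K\<^esub> c \<Longrightarrow> a \<in> carrier K \<Longrightarrow> b \<in> carrier K \<Longrightarrow> c \<in> carrier K \<Longrightarrow> a \<sqsubseteq>\<^bsub>K\<^esub> c" by (rule le_trans) qed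
lemma K_antisym: "lattice K \<Longrightarrow> a \<sqsubseteq>\<^bsub>K\<^esub> b \<Longrightarrow> b \<sqsubseteq>\<^bsub>K\<^esub> a \<Longrightarrow> a \<in> carrier K \<Longrightarrow> b \<in> carrier K \<Longrightarrow> a = b"
proof - assume "lattice K" then interpret lattice K . show "a \<sqsubseteq>\<^bsub>K\<^esub> b \<Longrightarrow> b \<sqsubseteq>\<^bsub>K\<^esub> a \<Longrightarrow> a \<in> carrier K \<Longrightarrow> b \<in> carrier K \<Longrightarrow> a = b" by (rule le_antisym) qed
lemma K_least_unique: "lattice K \<Longrightarrow> least K a A \<Longrightarrow> least K b A \<Longrightarrow> a = b"
  by (meson K_antisym least_closed least_le least_mem)

lemma le_prod: "(x \<sqsubseteq>\<^bsub>prod_sub Ls t S\<^esub> y) = (\<forall>i\<in>{1..t}. x i \<sqsubseteq>\<^bsub>Ls i\<^esub> y i)"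
  by (simp add: prod_sub_def)
lemma carrier_prod[simp]: "carrier (prod_sub Ls t S) = S"
  by (simp add: prod_sub_def)
lemma lless_prod: "(x \<sqsubset>\<^bsub>prod_sub Ls t S\<^esub> y) = (x \<sqsubseteq>\<^bsub>prod_sub Ls t S\<^esub> y \<and> x \<noteq> y)"
  by (simp add: lless_def prod_sub_def)


context
  fixes Ls :: "nat \<Rightarrow> 'a gorder" and t :: nat and S :: "(nat \<Rightarrow> 'a) set"
  assumes sp: "subdirect_product Ls t S"
begin

abbreviation "L \<equiv> prod_sub Ls t S"
definition "mt x y = (\<lambda>i\<in>{1..t}. x i \<sqinter>\<^bsub>Ls i\<^esub> y i)"
definition "jn x y = (\<lambda>i\<in>{1..t}. x i \<squnion>\<^bsub>Ls i\<^esub> y i)"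

lemma lat: "i \<in> {1..t} \<Longrightarrow> lattice (Ls i)"
  using sp by (simp add: subdirect_product_def)

lemma inPi: "x \<in> S \<Longrightarrow> x \<in> (\<Pi>\<^sub>E i\<in>{1..t}. carrier (Ls i))"
  using sp by (auto simp: subdirect_product_def)

lemma comp: "x \<in> S \<Longrightarrow> i \<in> {1..t} \<Longrightarrow> x i \<in> carrier (Ls i)"
  using inPi by blast

lemma finS: "finite S"
proof -
  have "finite (\<Pi>\<^sub>E i\<in>{1..t}. carrier (Ls i))"
    using sp by (intro finite_PiE) (auto simp: subdirect_product_def)
  then show ?thesis using inPi by (meson finite_subset subsetI)
qed

lemma mt_S: "x \<in> S \<Longrightarrow> y \<in> S \<Longrightarrow> mt x y \<in> S"
  using sp by (simp add: subdirect_product_def mt_def)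
lemma jn_S: "x \<in> S \<Longrightarrow> y \<in> S \<Longrightarrow> jn x y \<in> S"
  using sp by (simp add: subdirect_product_def jn_def)

lemma refl: "x \<in> S \<Longrightarrow> x \<sqsubseteq>\<^bsub>L\<^esub> x"
  by (simp add: le_prod K_refl lat comp)
lemma trans: "x \<sqsubseteq>\<^bsub>L\<^esub> y \<Longrightarrow> y \<sqsubseteq>\<^bsub>L\<^esub> z \<Longrightarrow> x \<in> S \<Longrightarrow> y \<in> S \<Longrightarrow> z \<in> S \<Longrightarrow> x \<sqsubseteq>\<^bsub>L\<^esub> z"
  unfolding le_prod by (meson K_trans lat comp)
lemma antisym: "x \<sqsubseteq>\<^bsub>L\<^esub> y \<Longrightarrow> y \<sqsubseteq>\<^bsub>L\<^esub> x \<Longrightarrow> x \<in> S \<Longrightarrow> y \<in> S \<Longrightarrow> x = y"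
  unfolding le_prod by (rule PiE_ext[OF inPi inPi]) (meson K_antisym lat comp)+

lemma mt_left: "x \<in> S \<Longrightarrow> y \<in> S \<Longrightarrow> mt x y \<sqsubseteq>\<^bsub>L\<^esub> x"
  by (simp add: le_prod mt_def K_meet_left lat comp)
lemma mt_right: "x \<in> S \<Longrightarrow> y \<in> S \<Longrightarrow> mt x y \<sqsubseteq>\<^bsub>L\<^esub> y"
  by (simp add: le_prod mt_def K_meet_right lat comp)
lemma mt_le: "z \<sqsubseteq>\<^bsub>L\<^esub> x \<Longrightarrow> z \<sqsubseteq>\<^bsub>L\<^esub> y \<Longrightarrow> x \<in> S \<Longrightarrow> y \<in> S \<Longrightarrow> z \<in> S \<Longrightarrow> z \<sqsubseteq>\<^bsub>L\<^esub> mt x y"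
  by (simp add: le_prod mt_def K_meet_le lat comp)
lemma jn_left: "x \<in> S \<Longrightarrow> y \<in> S \<Longrightarrow> x \<sqsubseteq>\<^bsub>L\<^esub> jn x y"
  by (simp add: le_prod jn_def K_join_left lat comp)
lemma jn_right: "x \<in> S \<Longrightarrow> y \<in> S \<Longrightarrow> y \<sqsubseteq>\<^bsub>L\<^esub> jn x y"
  by (simp add: le_prod jn_def K_join_right lat comp)
lemma jn_le: "x \<sqsubseteq>\<^bsub>L\<^esub> z \<Longrightarrow> y \<sqsubseteq>\<^bsub>L\<^esub> z \<Longrightarrow> x \<in> S \<Longrightarrow> y \<in> S \<Longrightarrow> z \<in> S \<Longrightarrow> jn x y \<sqsubseteq>\<^bsub>L\<^esub> z"
  by (simp add: le_prod jn_def K_join_le lat comp)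

lemma Inf_eq: assumes g: "greatest L g (Lower L A)" shows "\<Sqinter>\<^bsub>L\<^esub> A = g"
  unfolding inf_def
proof (rule someI2[of _ g])
  show "greatest L g (Lower L A)" by fact
  fix h assume h: "greatest L h (Lower L A)"
  have "g \<in> S" "h \<in> S" using g h by (auto dest!: greatest_closed)
  then show "h = g" using g h by (meson antisym greatest_le greatest_mem)
qed

lemma meet_eq: "a \<in> S \<Longrightarrow> b \<in> S \<Longrightarrow> a \<sqinter>\<^bsub>L\<^esub> b = mt a b"
  unfolding meet_def
  by (rule Inf_eq) (auto simp: greatest_def Lower_def mt_S mt_left mt_right mt_le)

lemma Sup_eq: assumes g: "least L g (Upper L A)" shows "\<Squnion>\<^bsub>L\<^esub> A = g"
  unfolding sup_def
proof (rule someI2[of _ g])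
  show "least L g (Upper L A)" by fact
  fix h assume h: "least L h (Upper L A)"
  have "g \<in> S" "h \<in> S" using g h by (auto dest!: least_closed)
  then show "h = g" using g h by (meson antisym least_le least_mem)
qed

lemma join_eq: "a \<in> S \<Longrightarrow> b \<in> S \<Longrightarrow> a \<squnion>\<^bsub>L\<^esub> b = jn a b"
  unfolding join_def
  by (rule Sup_eq) (auto simp: least_def Upper_def jn_S jn_left jn_right jn_le)

definition "dn u = card {v \<in> S. v \<sqsubseteq>\<^bsub>L\<^esub> u}"

lemma dn_mono: assumes "u \<in> S" "z \<in> S" "u \<sqsubseteq>\<^bsub>L\<^esub> z" "u \<noteq> z" shows "dn u < dn z"
  unfolding dn_def
proof (rule psubset_card_mono)
  show "finite {v \<in> S. v \<sqsubseteq>\<^bsub>L\<^esub> z}" using finS by simp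
  have "{v \<in> S. v \<sqsubseteq>\<^bsub>L\<^esub> u} \<subseteq> {v \<in> S. v \<sqsubseteq>\<^bsub>L\<^esub> z}" using assms trans by blast
  moreover have "z \<notin> {v \<in> S. v \<sqsubseteq>\<^bsub>L\<^esub> u}" using assms antisym by blast
  moreover have "z \<in> {v \<in> S. v \<sqsubseteq>\<^bsub>L\<^esub> z}" using assms refl by blast
  ultimately show "{v \<in> S. v \<sqsubseteq>\<^bsub>L\<^esub> u} \<subset> {v \<in> S. v \<sqsubseteq>\<^bsub>L\<^esub> z}" by blast
qed

lemma ex_max: assumes "finite A" "a \<in> A" shows "\<exists>u\<in>A. \<forall>v\<in>A. (f::_\<Rightarrow>nat) v \<le> f u"
proof -
  have "Max (f ` A) \<in> f ` A" using assms by (intro Max_in) auto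
  then obtain u where "u \<in> A" "f u = Max (f ` A)" by auto
  then show ?thesis using assms by (metis Max_ge finite_imageI imageI)
qed

lemma ex_min: assumes "finite A" "a \<in> A" shows "\<exists>u\<in>A. \<forall>v\<in>A. (f::_\<Rightarrow>nat) u \<le> f v"
proof -
  have "Min (f ` A) \<in> f ` A" using assms by (intro Min_in) auto
  then obtain u where "u \<in> A" "f u = Min (f ` A)" by auto
  then show ?thesis using assms by (metis Min_le finite_imageI imageI)
qed

lemma least_ex: "\<exists>b\<in>S. \<forall>z\<in>S. b \<sqsubseteq>\<^bsub>L\<^esub> z"
proof -
  obtain a where a: "a \<in> S" using sp by (auto simp: subdirect_product_def)
  obtain b where b: "b \<in> S" "\<forall>v\<in>S. dn b \<le> dn v" using ex_min[OF finS a] by blast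
  have "b \<sqsubseteq>\<^bsub>L\<^esub> z" if z: "z \<in> S" for z
  proof (rule ccontr)
    assume nz: "\<not> b \<sqsubseteq>\<^bsub>L\<^esub> z"
    have "mt b z \<noteq> b" using nz mt_right b z by metis
    then have "dn (mt b z) < dn b" using dn_mono mt_S mt_left b z by blast
    then show False using b mt_S z by fastforce
  qed
  then show ?thesis using b by blast
qed

lemma bottom_eq: assumes "b \<in> S" "\<forall>z\<in>S. b \<sqsubseteq>\<^bsub>L\<^esub> z" shows "\<bottom>\<^bsub>L\<^esub> = b"
  unfolding bottom_def
proof (rule someI2[of _ b])
  show "least L b (carrier L)" using assms by (simp add: least_def)
  fix h assume "least L h (carrier L)"
  then show "h = b" using assms by (metis antisym carrier_prod least_def subsetI)
qed

lemma cover_above: assumes y: "y \<in> S" and x: "x \<in> S" and yx: "y \<sqsubset>\<^bsub>L\<^esub> x"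
  shows "\<exists>w\<in>lower_covers L x. y \<sqsubseteq>\<^bsub>L\<^esub> w"
proof -
  let ?A = "{u \<in> S. y \<sqsubseteq>\<^bsub>L\<^esub> u \<and> u \<sqsubset>\<^bsub>L\<^esub> x}"
  have "y \<in> ?A" using y yx refl by blast
  then obtain u where u: "u \<in> ?A" "\<forall>v\<in>?A. dn v \<le> dn u"
    using ex_max[of ?A y dn] finS by auto
  have "covered_by L u x"
    unfolding covered_by_def
  proof (intro conjI)
    show "u \<in> carrier L" "x \<in> carrier L" "u \<sqsubset>\<^bsub>L\<^esub> x" using u x by auto
    show "\<not> (\<exists>z\<in>carrier L. u \<sqsubset>\<^bsub>L\<^esub> z \<and> z \<sqsubset>\<^bsub>L\<^esub> x)"
    proof
      assume "\<exists>z\<in>carrier L. u \<sqsubset>\<^bsub>L\<^esub> z \<and> z \<sqsubset>\<^bsub>L\<^esub> x"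
      then obtain z where z: "z \<in> S" "u \<sqsubset>\<^bsub>L\<^esub> z" "z \<sqsubset>\<^bsub>L\<^esub> x" by auto
      have "z \<in> ?A" using z u y trans unfolding lless_prod by blast
      moreover have "dn u < dn z" using dn_mono z u unfolding lless_prod by blast
      ultimately show False using u by fastforce
    qed
  qed
  then show ?thesis using u by (auto simp: lower_covers_def covered_by_def)
qed

lemma main:
  assumes x: "x \<in> S" and lt: "line_top L x"
  shows "sub_irreducible L x \<and> x \<in> scaffolding Ls t S"
proof -
  define LC where "LC = lower_covers L x"
  define m where "m = \<Sqinter>\<^bsub>L\<^esub> LC"
  have finLC: "finite LC" and c3: "card LC \<ge> 3" and mcov: "\<And>w. w \<in> LC \<Longrightarrow> covered_by L m w"
    using lt unfolding line_top_def LC_def m_def by auto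
  have LCS: "\<And>w. w \<in> LC \<Longrightarrow> w \<in> S \<and> w \<sqsubseteq>\<^bsub>L\<^esub> x \<and> w \<noteq> x"
    unfolding LC_def lower_covers_def covered_by_def lless_prod by auto
  have LCnb: "\<And>w z. w \<in> LC \<Longrightarrow> z \<in> S \<Longrightarrow> w \<sqsubseteq>\<^bsub>L\<^esub> z \<Longrightarrow> w \<noteq> z \<Longrightarrow> z \<sqsubseteq>\<^bsub>L\<^esub> x \<Longrightarrow> z = x"
    unfolding LC_def lower_covers_def covered_by_def lless_prod by auto
  have mS: "m \<in> S" and mle: "\<And>w. w \<in> LC \<Longrightarrow> m \<sqsubseteq>\<^bsub>L\<^esub> w \<and> m \<noteq> w"
    and mnb: "\<And>w z. w \<in> LC \<Longrightarrow> z \<in> S \<Longrightarrow> m \<sqsubseteq>\<^bsub>L\<^esub> z \<Longrightarrow> m \<noteq> z \<Longrightarrow> z \<sqsubseteq>\<^bsub>L\<^esub> w \<Longrightarrow> z = w"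
  proof -
    have "LC \<noteq> {}" using c3 by auto
    then obtain w0 where "w0 \<in> LC" by auto
    then show "m \<in> S" using mcov unfolding covered_by_def by auto
  next
    fix w assume "w \<in> LC" then show "m \<sqsubseteq>\<^bsub>L\<^esub> w \<and> m \<noteq> w"
      using mcov unfolding covered_by_def lless_prod by auto
  next
    fix w z assume "w \<in> LC" "z \<in> S" "m \<sqsubseteq>\<^bsub>L\<^esub> z" "m \<noteq> z" "z \<sqsubseteq>\<^bsub>L\<^esub> w"
    then show "z = w" using mcov[of w] unfolding covered_by_def lless_prod by auto
  qed
  have third: "\<And>a b. \<exists>c\<in>LC. c \<noteq> a \<and> c \<noteq> b"
  proof -
    fix a b
    have "card (LC - {a, b}) \<ge> card LC - card {a,b}" by (rule diff_card_le_card_Diff) (simp)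
    moreover have "card {a,b} \<le> 2" by (simp add: card_insert_le_m1)
    ultimately have "card (LC - {a, b}) > 0" using c3 by linarith
    then obtain c where "c \<in> LC - {a,b}" by (metis card_gt_0_iff ex_in_conv)
    then show "\<exists>c\<in>LC. c \<noteq> a \<and> c \<noteq> b" by auto
  qed
  have pair: "mt a b = m \<and> jn a b = x" if ab: "a \<in> LC" "b \<in> LC" "a \<noteq> b" for a b
  proof
    have aS: "a \<in> S" and bS: "b \<in> S" using ab LCS by auto
    have "m \<sqsubseteq>\<^bsub>L\<^esub> mt a b" using mt_le mle ab aS bS mS by blast
    moreover have "mt a b \<noteq> a"
    proof
      assume "mt a b = a"
      then have "a \<sqsubseteq>\<^bsub>L\<^esub> b" using mt_right aS bS by metis
      then show False using LCnb[of a b] ab LCS by auto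
    qed
    ultimately show "mt a b = m" using mnb[of a "mt a b"] ab mt_S aS bS mt_left by metis
    have "jn a b \<sqsubseteq>\<^bsub>L\<^esub> x" using jn_le LCS ab x by blast
    moreover have "jn a b \<noteq> a"
    proof
      assume "jn a b = a"
      then have "b \<sqsubseteq>\<^bsub>L\<^esub> a" using jn_right aS bS by metis
      then show False using LCnb[of b a] ab LCS by auto
    qed
    ultimately show "jn a b = x" using LCnb[of a "jn a b"] ab jn_S aS bS jn_left by metis
  qed
  have tr: "transposes_up L (c, m) (x, a)" if "a \<in> LC" "c \<in> LC" "a \<noteq> c" for a c
    unfolding transposes_up_def using that pair[of c a] LCS mS x meet_eq join_eq by auto
  have proj: "projective L (x, w1) (x, w2)" if "w1 \<in> LC" "w2 \<in> LC" for w1 w2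
  proof (cases "w1 = w2")
    case True then show ?thesis by (simp add: projective_def)
  next
    case False
    obtain c where c: "c \<in> LC" "c \<noteq> w1" "c \<noteq> w2" using third by blast
    let ?R = "\<lambda>q r. transposes_up L q r \<or> transposes_down L q r"
    have "?R (x, w1) (c, m)" using tr[of w1 c] c that by (auto simp: transposes_down_def)
    moreover have "?R (c, m) (x, w2)" using tr[of w2 c] c that by auto
    ultimately have "?R\<^sup>*\<^sup>* (x, w1) (x, w2)"
      by (rule rtranclp.rtrancl_into_rtrancl[OF r_into_rtranclp])
    then show ?thesis unfolding projective_def .
  qed
  obtain b where b: "b \<in> S" "\<forall>z\<in>S. b \<sqsubseteq>\<^bsub>L\<^esub> z" using least_ex by blast
  have bot: "\<bottom>\<^bsub>L\<^esub> = b" using bottom_eq b by blast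
  obtain w0 where w0: "w0 \<in> LC" using third by blast
  have "x \<noteq> b" using b LCS[OF w0] antisym by metis
  then have subirr: "sub_irreducible L x"
    unfolding sub_irreducible_def using x bot proj LC_def by auto
  have "m \<noteq> x" using mle[OF w0] LCS[OF w0] antisym mS by metis
  then obtain i where i: "i \<in> {1..t}" "m i \<noteq> x i" using PiE_ext[OF inPi[OF mS] inPi[OF x]] by blast
  note li = lat[OF i(1)]
  have mx: "m \<sqsubseteq>\<^bsub>L\<^esub> x" using mle[OF w0] LCS[OF w0] trans mS x by blast
  have claim: "x \<sqsubseteq>\<^bsub>L\<^esub> z" if z: "z \<in> S" "z i = x i" for z
  proof (rule ccontr)
    assume nz: "\<not> x \<sqsubseteq>\<^bsub>L\<^esub> z"
    define y where "y = mt x z"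
    have yS: "y \<in> S" using y_def mt_S x z by simp
    have "y \<noteq> x" using nz mt_right x z y_def by metis
    then have "y \<sqsubset>\<^bsub>L\<^esub> x" using mt_left x z y_def lless_prod by metis
    then obtain wk where wk: "wk \<in> LC" "y \<sqsubseteq>\<^bsub>L\<^esub> wk" using cover_above yS x LC_def by blast
    have yi: "y i = x i \<sqinter>\<^bsub>Ls i\<^esub> x i" using y_def mt_def i z by simp
    have "x i \<sqsubseteq>\<^bsub>Ls i\<^esub> y i" unfolding yi using K_meet_le[OF li] K_refl[OF li] comp[OF x i(1)] by blast
    moreover have "y i \<sqsubseteq>\<^bsub>Ls i\<^esub> wk i" using wk i le_prod by metis
    moreover have "wk i \<sqsubseteq>\<^bsub>Ls i\<^esub> x i" using LCS[OF wk(1)] i le_prod by metis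
    ultimately have wki: "wk i = x i"
      using K_trans[OF li] K_antisym[OF li] comp yS i(1) LCS[OF wk(1)] x by metis
    obtain wj where wj: "wj \<in> LC" "wj \<noteq> wk" using third by blast
    obtain wl where wl: "wl \<in> LC" "wl \<noteq> wk" "wl \<noteq> wj" using third by blast
    have wjS: "wj \<in> S" and wlS: "wl \<in> S" and wkS: "wk \<in> S" using LCS wj wl wk by auto
    have eq1: "wj i = m i" if "wj \<in> LC" "wj \<noteq> wk" for wj
    proof -
      have wjS: "wj \<in> S" using LCS that by auto
      have "mt wj wk = m" using pair[of wj wk] that wk by simp
      then have mi: "m i = wj i \<sqinter>\<^bsub>Ls i\<^esub> wk i" using i unfolding mt_def by (metis restrict_apply')
      have "m i \<sqsubseteq>\<^bsub>Ls i\<^esub> wj i" using mle that i le_prod by metis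
      moreover have "wj i \<sqsubseteq>\<^bsub>Ls i\<^esub> m i" unfolding mi
        using K_meet_le[OF li] K_refl[OF li] comp wjS wkS i wki LCS[OF that(1)] le_prod by metis
      ultimately show ?thesis using K_antisym[OF li] comp wjS mS i by metis
    qed
    have "jn wj wl = x" using pair[of wj wl] wj wl by simp
    then have "x i = wj i \<squnion>\<^bsub>Ls i\<^esub> wl i" using i unfolding jn_def by (metis restrict_apply')
    also have "\<dots> = m i \<squnion>\<^bsub>Ls i\<^esub> m i" using eq1[OF wj] eq1[OF wl(1,2)] by simp
    finally have xe: "x i = m i \<squnion>\<^bsub>Ls i\<^esub> m i" .
    have "m i \<squnion>\<^bsub>Ls i\<^esub> m i \<sqsubseteq>\<^bsub>Ls i\<^esub> m i"
      by (rule K_join_le[OF li]) (simp_all add: K_refl[OF li] comp[OF mS i(1)])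
    then have "x i \<sqsubseteq>\<^bsub>Ls i\<^esub> m i" using xe by simp
    moreover have "m i \<sqsubseteq>\<^bsub>Ls i\<^esub> x i" using mx i le_prod by metis
    ultimately show False using i K_antisym[OF li] comp mS x by metis
  qed
  have sig: "sigma Ls t S i (x i) = x"
    unfolding sigma_def
    by (rule Inf_eq) (auto simp: greatest_def Lower_def x claim)
  have bi: "\<bottom>\<^bsub>Ls i\<^esub> = b i"
    unfolding bottom_def
  proof (rule someI2[of _ "b i"])
    have "least (Ls i) (b i) (carrier (Ls i))"
      unfolding least_def
    proof (intro conjI ballI)
      show "b i \<in> carrier (Ls i)" using comp b i by blast
      fix c assume "c \<in> carrier (Ls i)"
      moreover have "(\<lambda>x. x i) ` S = carrier (Ls i)" using sp i by (simp add: subdirect_product_def)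
      ultimately obtain z where "z \<in> S" "c = z i" by blast
      then show "b i \<sqsubseteq>\<^bsub>Ls i\<^esub> c" using b i le_prod by metis
    qed simp
    then show "least (Ls i) (b i) (carrier (Ls i))" .
    fix h assume "least (Ls i) h (carrier (Ls i))"
    then show "h = b i" using K_least_unique[OF li] \<open>least (Ls i) (b i) (carrier (Ls i))\<close> by blast
  qed
  have "x i \<noteq> b i"
  proof
    assume "x i = b i"
    moreover have "b i \<sqsubseteq>\<^bsub>Ls i\<^esub> m i" using b mS i le_prod by metis
    moreover have "m i \<sqsubseteq>\<^bsub>Ls i\<^esub> x i" using mx i le_prod by metis
    ultimately show False using i K_antisym[OF li] comp mS x by metis
  qed
  have "x \<in> scaffolding Ls t S"
    unfolding scaffolding_def
  proof (rule UN_I[OF i(1)])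
    show "x \<in> sigma Ls t S i ` (carrier (Ls i) - {\<bottom>\<^bsub>Ls i\<^esub>})"
      by (rule image_eqI[where x="x i" and f="sigma Ls t S i", OF sig[symmetric]]) (use comp[OF x i(1)] bi \<open>x i \<noteq> b i\<close> in auto)
  qed
  then show ?thesis using subirr by blast
qed

end

theorem mainTheorem4:
  fixes Ls :: "nat \<Rightarrow> 'a gorder" and t :: nat and S :: "(nat \<Rightarrow> 'a) set"
  assumes "subdirect_product Ls t S"
  shows "\<forall>x\<in>S. line_top (prod_sub Ls t S) x \<longrightarrow>
           sub_irreducible (prod_sub Ls t S) x \<and> x \<in> scaffolding Ls t S"
  using main[OF assms] by blast

end
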